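(* Let $N$ be an odd positive integer and let $r\ge s\ge 2$, $r'\ge s'\ge2$ with $r\ge r'$ and $s\ge s'$, so that $\Phi_r^s\subset\Phi_{r'}^{s'}$. Then the diagram $$(\Phi_r^s)^{\mathrm{ab}}\to(\Phi_{r'}^{s'})^{\mathrm{ab}},\quad U':(\Phi_r^s)^{\mathrm{ab}}\to(\Phi_{r+1}^s)^{\mathrm{ab}},\quad U':(\Phi_{r'}^{s'})^{\mathrm{ab}}\to(\Phi_{r'+1}^{s'})^{\mathrm{ab}},\quad (\Phi_{r+1}^s)^{\mathrm{ab}}\to(\Phi_{r'+1}^{s'})^{\mathrm{ab}}$$ commutes, i.e. $U'$ followed by the inclusion-induced map $(\Phi_{r+1}^s)^{\mathrm{ab}}\to(\Phi_{r'+1}^{s'})^{\mathrm{ab}}$ equals the inclusion-induced map $(\Phi_r^s)^{\mathrm{ab}}\to(\Phi_{r'}^{s'})^{\mathrm{ab}}$ followed by $U'$. Consequently the Atkin operator $U$ commutes with the inclusion-induced morphism $(\Phi_r^s)^{\mathrm{ab}}\to(\Phi_{r'}^{s'})^{\mathrm{ab}}$.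
   Context: For $M\ge1$, $\Gamma_1(M)=\{\begin{pmatrix}a&b\\c&d\end{pmatrix}\in\mathrm{SL}_2(\mathbb{Z}) : c\equiv0,\ a\equiv d\equiv1 \pmod M\}$, $\Gamma_0(M)=\{c\equiv 0\pmod M\}$, and $\Gamma^0(2)=\{\begin{pmatrix}a&b\\c&d\end{pmatrix}\in\mathrm{SL}_2(\mathbb{Z}): b\equiv0\pmod 2\}$. For $r\ge s\ge2$, $\Phi_r^s:=\Gamma_1(N2^s)\cap\Gamma_0(2^r)$; $G^{\mathrm{ab}}$ denotes the abelianization of a group $G$. Let $t=\begin{pmatrix}1&0\\0&2\end{pmatrix}$. Then $\Phi_r^s\cap\Gamma^0(2)$ has index $2$ in $\Phi_r^s$, and $x\mapsto txt^{-1}$ is an isomorphism $\Phi_r^s\cap\Gamma^0(2)\to\Phi_{r+1}^s$. The operator $U':(\Phi_r^s)^{\mathrm{ab}}\to(\Phi_{r+1}^s)^{\mathrm{ab}}$ is the composite of the transfer $V:(\Phi_r^s)^{\mathrm{ab}}\to(\Phi_r^s\cap\Gamma^0(2))^{\mathrm{ab}}$ with the map induced by $x\mapsto txt^{-1}$; the Atkin operator $U\in\mathrm{End}((\Phi_r^s)^{\mathrm{ab}})$ is $U'$ followed by the map $(\Phi_{r+1}^s)^{\mathrm{ab}}\to(\Phi_r^s)^{\mathrm{ab}}$ induced by inclusion. *)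

theory Defs
  imports "HOL-Algebra.Algebra"
begin

text \<open>2x2 integer matrices ((a,b),(c,d)) encoded as tuples (a,b,c,d).\<close>
type_synonym mat2 = "int \<times> int \<times> int \<times> int"

fun m2mult :: "mat2 \<Rightarrow> mat2 \<Rightarrow> mat2" where
  "m2mult (a,b,c,d) (e,f,g,h) = (a*e+b*g, a*f+b*h, c*e+d*g, c*f+d*h)"

definition m2one :: mat2 where "m2one = (1,0,0,1)"

definition SL2Z :: "mat2 set" where
  "SL2Z = {(x,y,z,w). x*w - y*z = (1::int)}"

definition matgrp :: "mat2 set \<Rightarrow> mat2 monoid" where
  "matgrp S = \<lparr>carrier = S, monoid.mult = m2mult, one = m2one\<rparr>"

definition Gamma1 :: "int \<Rightarrow> mat2 set" where
  "Gamma1 M = {m \<in> SL2Z. case m of (a,b,c,d) \<Rightarrow> M dvd c \<and> M dvd (a - 1) \<and> M dvd (d - 1)}"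

definition Gamma0 :: "int \<Rightarrow> mat2 set" where
  "Gamma0 M = {m \<in> SL2Z. case m of (a,b,c,d) \<Rightarrow> M dvd c}"

definition Gamma0_upper2 :: "mat2 set" where
  "Gamma0_upper2 = {m \<in> SL2Z. case m of (a,b,c,d) \<Rightarrow> (2::int) dvd b}"

definition Phi :: "int \<Rightarrow> nat \<Rightarrow> nat \<Rightarrow> mat2 set" where
  "Phi N r s = Gamma1 (N * 2^s) \<inter> Gamma0 (2^r)"

definition ab :: "mat2 set \<Rightarrow> mat2 set monoid" where
  "ab S = matgrp S Mod derived (matgrp S) S"

definition cls :: "mat2 set \<Rightarrow> mat2 \<Rightarrow> mat2 set" where
  "cls S g = r_coset (matgrp S) (derived (matgrp S) S) g"

definition incl_ab :: "mat2 set \<Rightarrow> mat2 set \<Rightarrow> mat2 set \<Rightarrow> mat2 set" where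
  "incl_ab A B C = cls B (SOME g. g \<in> C)"

text \<open>Transfer G^ab \<rightarrow> H^ab for a subgroup H of finite index, via a right transversal T
  (H t, t \<in> T, are the distinct right cosets): V(g) = \<Prod>_{t\<in>T} class of t g (t')^{-1},
  where t' \<in> T with H t g = H t'.\<close>
definition right_transversal :: "mat2 set \<Rightarrow> mat2 set \<Rightarrow> mat2 set \<Rightarrow> bool" where
  "right_transversal G H T \<longleftrightarrow> T \<subseteq> G \<and>
     (\<forall>x\<in>G. \<exists>!t. t \<in> T \<and> r_coset (matgrp G) H x = r_coset (matgrp G) H t)"

definition tv_rep :: "mat2 set \<Rightarrow> mat2 set \<Rightarrow> mat2 set \<Rightarrow> mat2 \<Rightarrow> mat2" where
  "tv_rep G H T x = (THE t. t \<in> T \<and> r_coset (matgrp G) H x = r_coset (matgrp G) H t)"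

definition transfer_elt :: "mat2 set \<Rightarrow> mat2 set \<Rightarrow> mat2 \<Rightarrow> mat2 set" where
  "transfer_elt G H g =
     (let T = (SOME T. right_transversal G H T) in
      finprod (ab H)
        (\<lambda>t. cls H (m2mult (m2mult t g) (m_inv (matgrp G) (tv_rep G H T (m2mult t g))))) T)"

definition transfer_ab :: "mat2 set \<Rightarrow> mat2 set \<Rightarrow> mat2 set \<Rightarrow> mat2 set" where
  "transfer_ab G H C = transfer_elt G H (SOME g. g \<in> C)"

text \<open>Conjugation x \<mapsto> t x t^{-1}, t = diag(1,2): (a,b,c,d) \<mapsto> (a, b/2, 2c, d) (b even).\<close>
fun tconj :: "mat2 \<Rightarrow> mat2" where
  "tconj (x,y,z,w) = (x, y div 2, 2*z, w)"

definition Uprime :: "int \<Rightarrow> nat \<Rightarrow> nat \<Rightarrow> mat2 set \<Rightarrow> mat2 set" where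
  "Uprime N r s C =
     (let Y = transfer_ab (Phi N r s) (Phi N r s \<inter> Gamma0_upper2) C
      in cls (Phi N (Suc r) s) (tconj (SOME g. g \<in> Y)))"

definition Atkin_U :: "int \<Rightarrow> nat \<Rightarrow> nat \<Rightarrow> mat2 set \<Rightarrow> mat2 set" where
  "Atkin_U N r s C = incl_ab (Phi N (Suc r) s) (Phi N r s) (Uprime N r s C)"

end

theory Submission
  imports Defs
begin


abbreviation GG where "GG \<equiv> matgrp SL2Z"

fun minv :: "mat2 \<Rightarrow> mat2" where "minv (a,b,c,d) = (d,-b,-c,a)"

lemma m2mult_assoc: "m2mult (m2mult x y) z = m2mult x (m2mult y z)"
  by (cases x; cases y; cases z) (simp add: algebra_simps)

lemma m2one_l[simp]: "m2mult m2one x = x" by (cases x) (simp add: m2one_def)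
lemma m2one_r[simp]: "m2mult x m2one = x" by (cases x) (simp add: m2one_def)

lemma SL2Z_mult: "x \<in> SL2Z \<Longrightarrow> y \<in> SL2Z \<Longrightarrow> m2mult x y \<in> SL2Z"
proof -
  assume A: "x \<in> SL2Z" "y \<in> SL2Z"
  obtain x1 x2 x3 x4 where xx: "x = (x1,x2,x3,x4)" by (cases x) auto
  obtain y1 y2 y3 y4 where yy: "y = (y1,y2,y3,y4)" by (cases y) auto
  have 1: "x1*x4 - x2*x3 = 1" "y1*y4 - y2*y3 = 1" using A xx yy by (auto simp: SL2Z_def)
  have "(x1*y1+x2*y3)*(x3*y2+x4*y4) - (x1*y2+x2*y4)*(x3*y1+x4*y3) = (x1*x4-x2*x3)*(y1*y4-y2*y3)" by (simp add: algebra_simps)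
  then show ?thesis using 1 xx yy by (simp add: SL2Z_def)
qed
  
lemma minv_l: "x \<in> SL2Z \<Longrightarrow> m2mult (minv x) x = m2one"
  by (cases x) (simp add: SL2Z_def m2one_def algebra_simps)
lemma minv_r: "x \<in> SL2Z \<Longrightarrow> m2mult x (minv x) = m2one"
  by (cases x) (simp add: SL2Z_def m2one_def algebra_simps)
lemma minv_SL: "x \<in> SL2Z \<Longrightarrow> minv x \<in> SL2Z"
  by (cases x) (simp add: SL2Z_def algebra_simps)

lemma group_GG: "group GG"
  apply (rule groupI)
  apply (auto simp: matgrp_def SL2Z_mult m2mult_assoc)
  apply (simp add: SL2Z_def m2one_def)
  using minv_l minv_SL by blast


lemma matgrp_eq: "matgrp S = GG\<lparr>carrier := S\<rparr>" by (simp add: matgrp_def)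

lemma matgrp_simps[simp]: "carrier (matgrp S) = S" "monoid.mult (matgrp S) = m2mult" "one (matgrp S) = m2one"
  by (simp_all add: matgrp_def)

lemma inv_GG: "x \<in> SL2Z \<Longrightarrow> inv\<^bsub>GG\<^esub> x = minv x"
  by (rule group.inv_equality[OF group_GG]) (auto simp: minv_l minv_SL)

lemma inv_sub: "subgroup S GG \<Longrightarrow> x \<in> S \<Longrightarrow> inv\<^bsub>matgrp S\<^esub> x = minv x"
  using group.m_inv_consistent[OF group_GG, of S x] inv_GG subgroup.subset[of S GG]
  by (metis matgrp_eq partial_object.select_convs(1) subsetD matgrp_def)

lemma subgroupI2:
  assumes "S \<subseteq> SL2Z" "m2one \<in> S" "\<And>x y. x\<in>S \<Longrightarrow> y\<in>S \<Longrightarrow> m2mult x y \<in> S"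
    "\<And>x. x\<in>S \<Longrightarrow> minv x \<in> S"
  shows "subgroup S GG"
  apply (rule subgroup.intro)
  using assms by (auto simp: inv_GG)

lemma sub_Gamma1: "subgroup (Gamma1 M) GG"
proof (rule subgroupI2)
  show "Gamma1 M \<subseteq> SL2Z" by (auto simp: Gamma1_def)
  show "m2one \<in> Gamma1 M" by (simp add: Gamma1_def m2one_def SL2Z_def)
  fix x y assume x: "x \<in> Gamma1 M" and y: "y \<in> Gamma1 M"
  obtain x1 x2 x3 x4 where xx: "x = (x1,x2,x3,x4)" by (cases x) auto
  obtain y1 y2 y3 y4 where yy: "y = (y1,y2,y3,y4)" by (cases y) auto
  have h: "M dvd x3" "M dvd x1 - 1" "M dvd x4 - 1" "M dvd y3" "M dvd y1 - 1" "M dvd y4 - 1"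
    using x y xx yy by (auto simp: Gamma1_def)
  have "M dvd x3*y1+x4*y3" using h by simp
  moreover have "M dvd x1*y1+x2*y3 - 1"
  proof -
    have e: "x1*y1+x2*y3 - 1 = (x1-1)*y1 + (y1 - 1) + x2*y3" by (simp add: algebra_simps)
    have "M dvd (x1-1)*y1 + (y1 - 1) + x2*y3" using h by (intro dvd_add dvd_mult2 dvd_mult) auto
    then show ?thesis by (simp only: e)
  qed
  moreover have "M dvd x3*y2+x4*y4 - 1"
  proof -
    have e: "x3*y2+x4*y4 - 1 = x3*y2 + (x4-1)*y4 + (y4 - 1)" by (simp add: algebra_simps)
    have "M dvd x3*y2 + (x4-1)*y4 + (y4 - 1)" using h by (intro dvd_add dvd_mult2 dvd_mult) auto
    then show ?thesis by (simp only: e)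
  qed
  ultimately show "m2mult x y \<in> Gamma1 M" using x y SL2Z_mult xx yy by (auto simp: Gamma1_def)
next
  fix x assume x: "x \<in> Gamma1 M"
  obtain x1 x2 x3 x4 where xx: "x = (x1,x2,x3,x4)" by (cases x) auto
  show "minv x \<in> Gamma1 M" using x xx minv_SL[of x] by (auto simp: Gamma1_def)
qed

lemma sub_Gamma0: "subgroup (Gamma0 M) GG"
proof (rule subgroupI2)
  show "Gamma0 M \<subseteq> SL2Z" by (auto simp: Gamma0_def)
  show "m2one \<in> Gamma0 M" by (simp add: Gamma0_def m2one_def SL2Z_def)
  fix x y assume x: "x \<in> Gamma0 M" and y: "y \<in> Gamma0 M"
  obtain x1 x2 x3 x4 where xx: "x = (x1,x2,x3,x4)" by (cases x) auto
  obtain y1 y2 y3 y4 where yy: "y = (y1,y2,y3,y4)" by (cases y) auto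
  show "m2mult x y \<in> Gamma0 M" using x y SL2Z_mult xx yy by (auto simp: Gamma0_def)
next
  fix x assume x: "x \<in> Gamma0 M"
  obtain x1 x2 x3 x4 where xx: "x = (x1,x2,x3,x4)" by (cases x) auto
  show "minv x \<in> Gamma0 M" using x xx minv_SL[of x] by (auto simp: Gamma0_def)
qed

lemma sub_G02: "subgroup Gamma0_upper2 GG"
proof (rule subgroupI2)
  show "Gamma0_upper2 \<subseteq> SL2Z" by (auto simp: Gamma0_upper2_def)
  show "m2one \<in> Gamma0_upper2" by (simp add: Gamma0_upper2_def m2one_def SL2Z_def)
  fix x y assume x: "x \<in> Gamma0_upper2" and y: "y \<in> Gamma0_upper2"
  obtain x1 x2 x3 x4 where xx: "x = (x1,x2,x3,x4)" by (cases x) auto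
  obtain y1 y2 y3 y4 where yy: "y = (y1,y2,y3,y4)" by (cases y) auto
  show "m2mult x y \<in> Gamma0_upper2" using x y SL2Z_mult xx yy by (auto simp: Gamma0_upper2_def)
next
  fix x assume x: "x \<in> Gamma0_upper2"
  obtain x1 x2 x3 x4 where xx: "x = (x1,x2,x3,x4)" by (cases x) auto
  show "minv x \<in> Gamma0_upper2" using x xx minv_SL[of x] by (auto simp: Gamma0_upper2_def)
qed

lemma sub_Phi: "subgroup (Phi N r s) GG"
  unfolding Phi_def by (rule group.subgroups_Inter_pair[OF group_GG sub_Gamma1 sub_Gamma0])

lemma sub_PhiH: "subgroup (Phi N r s \<inter> Gamma0_upper2) GG"
  by (rule group.subgroups_Inter_pair[OF group_GG sub_Phi sub_G02])



lemma group_sub: "subgroup S GG \<Longrightarrow> group (matgrp S)"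
  using group.subgroup_imp_group[OF group_GG] by (metis matgrp_eq)

lemma derived_eq: "subgroup S GG \<Longrightarrow> derived (matgrp S) S = derived GG S"
  using group.derived_consistent[OF group_GG, of S S] by (metis matgrp_eq order_refl)

lemma derived_normal: "subgroup S GG \<Longrightarrow> derived GG S \<lhd> matgrp S"
  using group.derived_subgroup_is_normal[OF group_GG] by (metis matgrp_eq)

lemma comm_ab: "subgroup S GG \<Longrightarrow> comm_group (ab S)"
  using group.derived_quot_of_subgroup_is_comm_group[OF group_GG, of S]
  by (metis ab_def matgrp_eq derived_eq)

lemma derived_sub: "subgroup S GG \<Longrightarrow> derived GG S \<subseteq> S"
  using group.derived_incl[OF group_GG, of S S] by auto

lemma cls_eq_def: "subgroup S GG \<Longrightarrow> cls S g = derived GG S #>\<^bsub>matgrp S\<^esub> g"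
  by (simp add: cls_def derived_eq)

lemma carrier_ab: "subgroup S GG \<Longrightarrow> carrier (ab S) = cls S ` S"
  by (auto simp: ab_def FactGroup_def RCOSETS_def cls_eq_def derived_eq)

lemma cls_in: "subgroup S GG \<Longrightarrow> g \<in> S \<Longrightarrow> cls S g \<in> carrier (ab S)"
  by (simp add: carrier_ab)

lemma cls_mult: "subgroup S GG \<Longrightarrow> g \<in> S \<Longrightarrow> h \<in> S \<Longrightarrow>
   cls S g \<otimes>\<^bsub>ab S\<^esub> cls S h = cls S (m2mult g h)"
  using normal.rcos_sum[OF derived_normal, of S g h]
  by (simp add: ab_def FactGroup_def cls_eq_def derived_eq)

lemma cls_self: "subgroup S GG \<Longrightarrow> g \<in> S \<Longrightarrow> g \<in> cls S g"
  using group.rcos_self[OF group_sub, of S g "derived GG S"] normal.axioms(1)[OF derived_normal, of S]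
  by (simp add: cls_eq_def)

lemma cls_repr: "subgroup S GG \<Longrightarrow> g \<in> S \<Longrightarrow> z \<in> cls S g \<Longrightarrow> cls S z = cls S g"
  using group.repr_independence[OF group_sub, of S z "derived GG S" g] normal.axioms(1)[OF derived_normal, of S]
  by (simp add: cls_eq_def)

lemma sub_mult: "subgroup S GG \<Longrightarrow> x\<in>S \<Longrightarrow> y\<in>S \<Longrightarrow> m2mult x y \<in> S"
  using subgroup.m_closed[of S GG x y] by simp

lemma sub_one: "subgroup S GG \<Longrightarrow> m2one \<in> S"
  using subgroup.one_closed[of S GG] by simp

lemma sub_inv: "subgroup S GG \<Longrightarrow> x\<in>S \<Longrightarrow> minv x \<in> S"
  using subgroup.m_inv_closed[of S GG x] inv_GG[of x] subgroup.subset[of S GG] by auto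

lemma sub_SL: "subgroup S GG \<Longrightarrow> x\<in>S \<Longrightarrow> x \<in> SL2Z"
  using subgroup.subset[of S GG] by auto

lemma cls_sub: "subgroup S GG \<Longrightarrow> g \<in> S \<Longrightarrow> cls S g \<subseteq> S"
proof
  fix w assume S: "subgroup S GG" and g: "g \<in> S" and w: "w \<in> cls S g"
  then obtain d where "d \<in> derived GG S" "w = m2mult d g" unfolding cls_eq_def[OF S] r_coset_def by auto
  then show "w \<in> S" using derived_sub[OF S] sub_mult[OF S _ g] by blast
qed

lemma carrier_ab_some: "subgroup S GG \<Longrightarrow> C \<in> carrier (ab S) \<Longrightarrow>
   (SOME g. g \<in> C) \<in> C \<and> (SOME g. g \<in> C) \<in> S \<and> C = cls S (SOME g. g \<in> C)"
proof -
  assume S: "subgroup S GG" and C: "C \<in> carrier (ab S)"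
  then obtain g where g: "g \<in> S" "C = cls S g" by (auto simp: carrier_ab)
  then have "g \<in> C" using cls_self S by auto
  then have i: "(SOME g. g \<in> C) \<in> C" by (rule someI)
  then show ?thesis using g cls_repr[OF S g(1)] cls_sub[OF S g(1)] by auto
qed

lemma derived_mono: "A \<subseteq> B \<Longrightarrow> derived GG A \<subseteq> derived GG B"
  by (rule group.mono_derived[OF group_GG])

lemma cls_incl: "subgroup A GG \<Longrightarrow> subgroup B GG \<Longrightarrow> A \<subseteq> B \<Longrightarrow> z \<in> A \<Longrightarrow> w \<in> cls A z
   \<Longrightarrow> cls B w = cls B z"
proof -
  assume A: "subgroup A GG" and B: "subgroup B GG" and AB: "A \<subseteq> B" and z: "z \<in> A" and w: "w \<in> cls A z"
  have "w \<in> cls B z" using w derived_mono[OF AB]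
    by (auto simp: cls_eq_def[OF A] cls_eq_def[OF B] r_coset_def)
  then show ?thesis using cls_repr[OF B, of z w] z AB by auto
qed

lemma incl_ab_cls: "subgroup A GG \<Longrightarrow> subgroup B GG \<Longrightarrow> A \<subseteq> B \<Longrightarrow> z \<in> A
   \<Longrightarrow> incl_ab A B (cls A z) = cls B z"
  unfolding incl_ab_def
  by (rule cls_incl[of A B z]) (auto intro: someI cls_self)



definition tau :: mat2 where "tau = (1,1,0,1)"
definition tinv :: mat2 where "tinv = (1,-1,0,1)"

lemma minv_mult: "minv (m2mult a b) = m2mult (minv b) (minv a)"
  by (cases a; cases b) (simp add: algebra_simps)
lemma minv_minv[simp]: "minv (minv a) = a" by (cases a) simp
lemma tau_SL[simp]: "tau \<in> SL2Z" and tinv_SL[simp]: "tinv \<in> SL2Z"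
  by (simp_all add: tau_def tinv_def SL2Z_def)
lemma minv_tau[simp]: "minv tau = tinv" and minv_tinv[simp]: "minv tinv = tau"
  by (simp_all add: tau_def tinv_def)
lemma cancel1[simp]: "x \<in> SL2Z \<Longrightarrow> m2mult (minv x) (m2mult x y) = y"
  by (metis m2mult_assoc minv_l m2one_l)
lemma cancel2[simp]: "x \<in> SL2Z \<Longrightarrow> m2mult x (m2mult (minv x) y) = y"
  by (metis m2mult_assoc minv_r m2one_l)
lemma cancel3[simp]: "m2mult tinv (m2mult tau y) = y" "m2mult tau (m2mult tinv y) = y"
  using cancel1[OF tau_SL] cancel2[OF tau_SL] by auto
lemma cancel4[simp]: "m2mult tinv tau = m2one" "m2mult tau tinv = m2one"
  using minv_l[OF tau_SL] minv_r[OF tau_SL] by auto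
lemma minv_l'[simp]: "x \<in> SL2Z \<Longrightarrow> m2mult (minv x) x = m2one" by (rule minv_l)
lemma minv_r'[simp]: "x \<in> SL2Z \<Longrightarrow> m2mult x (minv x) = m2one" by (rule minv_r)

abbreviation P where "P \<equiv> Gamma0_upper2"

definition w :: "mat2 \<Rightarrow> mat2" where
  "w g = (if g \<in> P then m2mult g (m2mult (m2mult tau g) tinv) else m2mult (m2mult g tinv) (m2mult tau g))"

locale idx2 =
  fixes G :: "mat2 set"
  assumes subG: "subgroup G GG" and tauG: "tau \<in> G" and tauP: "tau \<notin> P"
    and key: "\<And>x. x \<in> G \<Longrightarrow> x \<notin> P \<Longrightarrow> m2mult x tinv \<in> P"
begin

abbreviation "H \<equiv> G \<inter> P"

lemma subH: "subgroup H GG"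
  by (rule group.subgroups_Inter_pair[OF group_GG subG sub_G02])

lemma tinvG: "tinv \<in> G" using sub_inv[OF subG tauG] by simp

lemma GSL: "x \<in> G \<Longrightarrow> x \<in> SL2Z" by (rule sub_SL[OF subG])
lemma Gm: "x \<in> G \<Longrightarrow> y \<in> G \<Longrightarrow> m2mult x y \<in> G" by (rule sub_mult[OF subG])
lemma Gi: "x \<in> G \<Longrightarrow> minv x \<in> G" by (rule sub_inv[OF subG])
lemma Pm: "x \<in> P \<Longrightarrow> y \<in> P \<Longrightarrow> m2mult x y \<in> P" by (rule sub_mult[OF sub_G02])
lemma Pi: "x \<in> P \<Longrightarrow> minv x \<in> P" by (rule sub_inv[OF sub_G02])
lemma PSL: "x \<in> P \<Longrightarrow> x \<in> SL2Z" by (rule sub_SL[OF sub_G02])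

lemma key2: "x \<in> G \<Longrightarrow> x \<notin> P \<Longrightarrow> m2mult x tinv \<in> H"
  using key Gm tinvG by blast

lemma L1: "x \<in> G \<Longrightarrow> y \<in> G \<Longrightarrow> x \<notin> P \<Longrightarrow> y \<notin> P \<Longrightarrow> m2mult x (minv y) \<in> P"
proof -
  assume a: "x \<in> G" "y \<in> G" "x \<notin> P" "y \<notin> P"
  have "m2mult (m2mult x tinv) (minv (m2mult y tinv)) \<in> P" using key a Pm Pi by blast
  then show ?thesis by (simp add: minv_mult m2mult_assoc)
qed

lemma L2: "x \<in> G \<Longrightarrow> x \<notin> P \<Longrightarrow> m2mult tau x \<in> P"
proof -
  assume a: "x \<in> G" "x \<notin> P"
  have "minv x \<notin> P" using a Pi by fastforce
  then have "m2mult (minv x) tinv \<in> P" using key Gi a by blast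
  then have "minv (m2mult (minv x) tinv) \<in> P" by (rule Pi)
  then show ?thesis by (simp add: minv_mult)
qed

lemma L3: "g \<in> H \<Longrightarrow> m2mult (m2mult tau g) tinv \<in> P"
proof -
  assume g: "g \<in> H"
  have "m2mult tau g \<notin> P"
  proof
    assume "m2mult tau g \<in> P"
    then have "m2mult (m2mult tau g) (minv g) \<in> P" using g Pm Pi by blast
    then have "tau \<in> P" using g PSL by (simp add: m2mult_assoc)
    then show False using tauP by simp
  qed
  then show ?thesis using key g tauG Gm by blast
qed

lemma Pmult_cases:
  assumes "g \<in> G" "h \<in> G"
  shows "g \<in> P \<Longrightarrow> h \<notin> P \<Longrightarrow> m2mult g h \<notin> P"
    and "g \<notin> P \<Longrightarrow> h \<in> P \<Longrightarrow> m2mult g h \<notin> P"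
    and "g \<notin> P \<Longrightarrow> h \<notin> P \<Longrightarrow> m2mult g h \<in> P"
proof -
  show "g \<in> P \<Longrightarrow> h \<notin> P \<Longrightarrow> m2mult g h \<notin> P"
  proof
    assume "g \<in> P" "h \<notin> P" "m2mult g h \<in> P"
    then have "m2mult (minv g) (m2mult g h) \<in> P" using Pm Pi by blast
    then show False using \<open>h \<notin> P\<close> \<open>g \<in> P\<close> PSL by simp
  qed
  show "g \<notin> P \<Longrightarrow> h \<in> P \<Longrightarrow> m2mult g h \<notin> P"
  proof
    assume "g \<notin> P" "h \<in> P" "m2mult g h \<in> P"
    then have "m2mult (m2mult g h) (minv h) \<in> P" using Pm Pi by blast
    then show False using \<open>g \<notin> P\<close> \<open>h \<in> P\<close> PSL by (simp add: m2mult_assoc)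
  qed
  show "g \<notin> P \<Longrightarrow> h \<notin> P \<Longrightarrow> m2mult g h \<in> P"
  proof -
    assume "g \<notin> P" "h \<notin> P"
    then have "m2mult (m2mult g tinv) (m2mult tau h) \<in> P" using key L2 assms Pm by blast
    then show ?thesis by (simp add: m2mult_assoc)
  qed
qed

lemma w_in: "g \<in> G \<Longrightarrow> w g \<in> H"
proof -
  assume g: "g \<in> G"
  have wG: "w g \<in> G" using g tauG tinvG Gm by (simp add: w_def)
  show ?thesis
  proof (cases "g \<in> P")
    case True then show ?thesis using wG L3 g Pm by (simp add: w_def)
  next
    case False then show ?thesis using wG key L2 g Pm by (simp add: w_def)
  qed
qed

definition Wm where "Wm g = cls H (w g)"

lemma cH: "x \<in> H \<Longrightarrow> cls H x \<in> carrier (ab H)" by (rule cls_in[OF subH])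
lemma cHm: "x \<in> H \<Longrightarrow> y \<in> H \<Longrightarrow> cls H (m2mult x y) = cls H x \<otimes>\<^bsub>ab H\<^esub> cls H y"
  by (rule cls_mult[OF subH, symmetric])
lemma Hm: "x \<in> H \<Longrightarrow> y \<in> H \<Longrightarrow> m2mult x y \<in> H" by (rule sub_mult[OF subH])

lemma cls4: "a \<in> H \<Longrightarrow> b \<in> H \<Longrightarrow> c \<in> H \<Longrightarrow> d \<in> H \<Longrightarrow>
  cls H (m2mult (m2mult a b) (m2mult c d)) = cls H a \<otimes>\<^bsub>ab H\<^esub> cls H b \<otimes>\<^bsub>ab H\<^esub> cls H c \<otimes>\<^bsub>ab H\<^esub> cls H d"
proof -
  assume h: "a \<in> H" "b \<in> H" "c \<in> H" "d \<in> H"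
  interpret A: comm_group "ab H" by (rule comm_ab[OF subH])
  have "cls H (m2mult (m2mult a b) (m2mult c d)) = cls H (m2mult a b) \<otimes>\<^bsub>ab H\<^esub> cls H (m2mult c d)"
    by (rule cHm[OF Hm[OF h(1,2)] Hm[OF h(3,4)]])
  also have "\<dots> = (cls H a \<otimes>\<^bsub>ab H\<^esub> cls H b) \<otimes>\<^bsub>ab H\<^esub> (cls H c \<otimes>\<^bsub>ab H\<^esub> cls H d)"
    by (simp only: cHm[OF h(1,2)] cHm[OF h(3,4)])
  also have "\<dots> = cls H a \<otimes>\<^bsub>ab H\<^esub> cls H b \<otimes>\<^bsub>ab H\<^esub> cls H c \<otimes>\<^bsub>ab H\<^esub> cls H d"
    using cH[OF h(1)] cH[OF h(2)] cH[OF h(3)] cH[OF h(4)] by (simp add: A.m_assoc)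
  finally show ?thesis .
qed

lemma Wm_hom: "g \<in> G \<Longrightarrow> h \<in> G \<Longrightarrow> Wm (m2mult g h) = Wm g \<otimes>\<^bsub>ab H\<^esub> Wm h"
proof -
  assume g: "g \<in> G" and h: "h \<in> G"
  interpret A: comm_group "ab H" by (rule comm_ab[OF subH])
  have gh: "m2mult g h \<in> G" using g h Gm by blast
  have cg: "\<And>x. x \<in> H \<Longrightarrow> cls H x \<in> carrier (ab H)" by (rule cH)
  have conjH: "\<And>x. x \<in> H \<Longrightarrow> m2mult (m2mult tau x) tinv \<in> H"
    using L3 tauG tinvG Gm by blast
  have tH: "\<And>x. x \<in> G \<Longrightarrow> x \<notin> P \<Longrightarrow> m2mult tau x \<in> H" using L2 tauG Gm by blast
  show ?thesis
  proof (cases "g \<in> P"; cases "h \<in> P")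
    assume a: "g \<in> P" "h \<in> P"
    have ghP: "m2mult g h \<in> P" using a Pm by blast
    have e: "w (m2mult g h) = m2mult (m2mult g h) (m2mult (m2mult (m2mult tau g) tinv) (m2mult (m2mult tau h) tinv))"
      using ghP by (simp add: w_def m2mult_assoc)
    have "Wm (m2mult g h) = cls H g \<otimes>\<^bsub>ab H\<^esub> cls H h \<otimes>\<^bsub>ab H\<^esub> cls H (m2mult (m2mult tau g) tinv) \<otimes>\<^bsub>ab H\<^esub> cls H (m2mult (m2mult tau h) tinv)"
      unfolding Wm_def e using a g h conjH by (intro cls4) auto
    moreover have "Wm g \<otimes>\<^bsub>ab H\<^esub> Wm h = cls H g \<otimes>\<^bsub>ab H\<^esub> cls H (m2mult (m2mult tau g) tinv) \<otimes>\<^bsub>ab H\<^esub> (cls H h \<otimes>\<^bsub>ab H\<^esub> cls H (m2mult (m2mult tau h) tinv))"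
      unfolding Wm_def using a g h conjH by (simp add: w_def cHm)
    ultimately show ?thesis using a g h conjH cg by (simp add: A.m_ac)
  next
    assume a: "g \<in> P" "h \<notin> P"
    have ghP: "m2mult g h \<notin> P" using a Pmult_cases g h by blast
    have e: "w (m2mult g h) = m2mult (m2mult g (m2mult h tinv)) (m2mult (m2mult (m2mult tau g) tinv) (m2mult tau h))"
      using ghP by (simp add: w_def m2mult_assoc)
    have "Wm (m2mult g h) = cls H g \<otimes>\<^bsub>ab H\<^esub> cls H (m2mult h tinv) \<otimes>\<^bsub>ab H\<^esub> cls H (m2mult (m2mult tau g) tinv) \<otimes>\<^bsub>ab H\<^esub> cls H (m2mult tau h)"
      unfolding Wm_def e using a g h conjH key2 tH by (intro cls4) auto
    moreover have "Wm g \<otimes>\<^bsub>ab H\<^esub> Wm h = cls H g \<otimes>\<^bsub>ab H\<^esub> cls H (m2mult (m2mult tau g) tinv) \<otimes>\<^bsub>ab H\<^esub> (cls H (m2mult h tinv) \<otimes>\<^bsub>ab H\<^esub> cls H (m2mult tau h))"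
      unfolding Wm_def using a g h conjH key2 tH by (simp add: w_def cHm)
    ultimately show ?thesis using a g h conjH cg key2 tH by (simp add: A.m_ac)
  next
    assume a: "g \<notin> P" "h \<in> P"
    have ghP: "m2mult g h \<notin> P" using a Pmult_cases g h by blast
    have e: "w (m2mult g h) = m2mult (m2mult (m2mult g tinv) (m2mult (m2mult tau h) tinv)) (m2mult (m2mult tau g) h)"
      using ghP by (simp add: w_def m2mult_assoc)
    have "Wm (m2mult g h) = cls H (m2mult g tinv) \<otimes>\<^bsub>ab H\<^esub> cls H (m2mult (m2mult tau h) tinv) \<otimes>\<^bsub>ab H\<^esub> cls H (m2mult tau g) \<otimes>\<^bsub>ab H\<^esub> cls H h"
      unfolding Wm_def e using a g h conjH key2 tH by (intro cls4) auto
    moreover have "Wm g \<otimes>\<^bsub>ab H\<^esub> Wm h = cls H (m2mult g tinv) \<otimes>\<^bsub>ab H\<^esub> cls H (m2mult tau g) \<otimes>\<^bsub>ab H\<^esub> (cls H h \<otimes>\<^bsub>ab H\<^esub> cls H (m2mult (m2mult tau h) tinv))"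
      unfolding Wm_def using a g h conjH key2 tH by (simp add: w_def cHm)
    ultimately show ?thesis using a g h conjH cg key2 tH by (simp add: A.m_ac)
  next
    assume a: "g \<notin> P" "h \<notin> P"
    have ghP: "m2mult g h \<in> P" using a Pmult_cases g h by blast
    have e: "w (m2mult g h) = m2mult (m2mult (m2mult g tinv) (m2mult tau h)) (m2mult (m2mult tau g) (m2mult h tinv))"
      using ghP by (simp add: w_def m2mult_assoc)
    have "Wm (m2mult g h) = cls H (m2mult g tinv) \<otimes>\<^bsub>ab H\<^esub> cls H (m2mult tau h) \<otimes>\<^bsub>ab H\<^esub> cls H (m2mult tau g) \<otimes>\<^bsub>ab H\<^esub> cls H (m2mult h tinv)"
      unfolding Wm_def e using a g h conjH key2 tH by (intro cls4) auto
    moreover have "Wm g \<otimes>\<^bsub>ab H\<^esub> Wm h = cls H (m2mult g tinv) \<otimes>\<^bsub>ab H\<^esub> cls H (m2mult tau g) \<otimes>\<^bsub>ab H\<^esub> (cls H (m2mult h tinv) \<otimes>\<^bsub>ab H\<^esub> cls H (m2mult tau h))"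
      unfolding Wm_def using a g h conjH key2 tH by (simp add: w_def cHm)
    ultimately show ?thesis using a g h conjH cg key2 tH by (simp add: A.m_ac)
  qed
qed

lemma Wm_carrier: "g \<in> G \<Longrightarrow> Wm g \<in> carrier (ab H)"
  unfolding Wm_def by (rule cH[OF w_in])

lemma Wm_group_hom: "group_hom (matgrp G) (ab H) Wm"
proof -
  interpret A: comm_group "ab H" by (rule comm_ab[OF subH])
  show ?thesis
    apply (rule group_hom.intro)
      apply (rule group_sub[OF subG])
     apply (rule A.is_group)
    apply (rule group_hom_axioms.intro)
    apply (auto simp: hom_def Wm_carrier Wm_hom)
    done
qed

lemma Wm_derived: "d \<in> derived GG G \<Longrightarrow> Wm d = \<one>\<^bsub>ab H\<^esub>"
proof -
  assume d: "d \<in> derived GG G"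
  interpret A: comm_group "ab H" by (rule comm_ab[OF subH])
  interpret W: group_hom "matgrp G" "ab H" Wm by (rule Wm_group_hom)
  have "derived (ab H) (Wm ` G) = Wm ` (derived (matgrp G) G)"
    using W.derived_img[of G] by simp
  moreover have "derived (ab H) (Wm ` G) = {\<one>\<^bsub>ab H\<^esub>}"
    by (rule A.derived_eq_singleton) (auto intro: Wm_carrier)
  ultimately show ?thesis using d derived_eq[OF subG] by auto
qed

lemma Wm_cls: "g0 \<in> G \<Longrightarrow> g2 \<in> cls G g0 \<Longrightarrow> Wm g2 = Wm g0"
proof -
  assume g0: "g0 \<in> G" and g2: "g2 \<in> cls G g0"
  interpret A: comm_group "ab H" by (rule comm_ab[OF subH])
  obtain d where d: "d \<in> derived GG G" "g2 = m2mult d g0"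
    using g2 unfolding cls_eq_def[OF subG] r_coset_def by auto
  have dG: "d \<in> G" using d derived_sub[OF subG] by blast
  have "Wm g2 = Wm d \<otimes>\<^bsub>ab H\<^esub> Wm g0" using d dG g0 Wm_hom by simp
  then show ?thesis using Wm_derived[OF d(1)] Wm_carrier[OF g0] by simp
qed

lemma subHG: "subgroup H (matgrp G)"
  using group.subgroup_incl[OF group_GG subH subG] matgrp_eq by (metis inf_le1)

lemma coset_eq: "x \<in> G \<Longrightarrow> y \<in> G \<Longrightarrow>
  (r_coset (matgrp G) H x = r_coset (matgrp G) H y) = (m2mult x (minv y) \<in> H)"
proof -
  assume x: "x \<in> G" and y: "y \<in> G"
  interpret MG: group "matgrp G" by (rule group_sub[OF subG])
  interpret SH: subgroup H "matgrp G" by (rule subHG)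
  have inv: "inv\<^bsub>matgrp G\<^esub> y = minv y" by (rule inv_sub[OF subG y])
  show ?thesis
  proof
    assume e: "r_coset (matgrp G) H x = r_coset (matgrp G) H y"
    have "x \<in> r_coset (matgrp G) H y" using MG.rcos_self[OF _ subHG, of x] x e by simp
    then show "m2mult x (minv y) \<in> H" using SH.rcos_module_imp[OF MG.is_group, of y x] y inv by simp
  next
    assume m: "m2mult x (minv y) \<in> H"
    have "x \<in> r_coset (matgrp G) H y" using SH.rcos_module_rev[OF MG.is_group, of y x] x y m inv by simp
    then show "r_coset (matgrp G) H x = r_coset (matgrp G) H y"
      using MG.repr_independence[OF _ _ subHG, of x y] y by simp
  qed
qed

lemma minv_one: "minv m2one = m2one" by (simp add: m2one_def)

lemma rt_exists: "right_transversal G H {m2one, tau}"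
proof -
  have oneG: "m2one \<in> G" by (rule sub_one[OF subG])
  have "\<exists>!t. t \<in> {m2one, tau} \<and> r_coset (matgrp G) H x = r_coset (matgrp G) H t" if x: "x \<in> G" for x
  proof (cases "x \<in> P")
    case True
    have a: "m2mult x (minv m2one) \<in> H" using x True by (simp add: minv_one)
    have b: "m2mult x (minv tau) \<notin> H"
    proof
      assume "m2mult x (minv tau) \<in> H"
      then have "m2mult (minv x) (m2mult x tinv) \<in> P" using Pm Pi True by simp
      then have "tinv \<in> P" using x GSL by simp
      then show False using Pi tauP by fastforce
    qed
    have c1: "r_coset (matgrp G) H x = r_coset (matgrp G) H m2one" using a coset_eq[OF x oneG] by blast
    have c2: "r_coset (matgrp G) H x \<noteq> r_coset (matgrp G) H tau" using b coset_eq[OF x tauG] by blast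
    show ?thesis
    proof (rule ex1I[of _ m2one])
      show "m2one \<in> {m2one, tau} \<and> r_coset (matgrp G) H x = r_coset (matgrp G) H m2one" using c1 by simp
      fix t assume "t \<in> {m2one, tau} \<and> r_coset (matgrp G) H x = r_coset (matgrp G) H t"
      then show "t = m2one" using c2 by blast
    qed
  next
    case False
    have a: "m2mult x (minv m2one) \<notin> H" using x False by (simp add: minv_one)
    have b: "m2mult x (minv tau) \<in> H" using key2 x False by simp
    have c1: "r_coset (matgrp G) H x \<noteq> r_coset (matgrp G) H m2one" using a coset_eq[OF x oneG] by blast
    have c2: "r_coset (matgrp G) H x = r_coset (matgrp G) H tau" using b coset_eq[OF x tauG] by blast
    show ?thesis
    proof (rule ex1I[of _ tau])
      show "tau \<in> {m2one, tau} \<and> r_coset (matgrp G) H x = r_coset (matgrp G) H tau" using c2 by simp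
      fix t assume "t \<in> {m2one, tau} \<and> r_coset (matgrp G) H x = r_coset (matgrp G) H t"
      then show "t = tau" using c1 by blast
    qed
  qed
  moreover have "{m2one, tau} \<subseteq> G" using oneG tauG by blast
  ultimately show ?thesis unfolding right_transversal_def by blast
qed


lemma rt_struct:
  assumes rt: "right_transversal G H T"
  shows "\<exists>t1 t2. T = {t1,t2} \<and> t1 \<in> H \<and> t2 \<in> G \<and> t2 \<notin> P \<and>
           (\<forall>x\<in>G. tv_rep G H T x = (if x \<in> P then t1 else t2))"
proof -
  have TG: "T \<subseteq> G" using rt by (simp add: right_transversal_def)
  define E where "E x t \<longleftrightarrow> t \<in> T \<and> m2mult x (minv t) \<in> H" for x t
  have EE: "(t \<in> T \<and> r_coset (matgrp G) H x = r_coset (matgrp G) H t) = E x t" if "x \<in> G" for x t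
    using coset_eq[OF that, of t] TG unfolding E_def by blast
  have uE: "\<exists>!t. E x t" if "x \<in> G" for x
  proof -
    have "\<exists>!t. t \<in> T \<and> r_coset (matgrp G) H x = r_coset (matgrp G) H t"
      using rt that unfolding right_transversal_def by blast
    then show ?thesis by (simp only: EE[OF that])
  qed
  have tv: "tv_rep G H T x = (THE t. E x t)" if "x \<in> G" for x
    unfolding tv_rep_def using EE[OF that] by simp
  have oneG: "m2one \<in> G" by (rule sub_one[OF subG])
  obtain t1 where t1: "E m2one t1" using uE[OF oneG] by blast
  obtain t2 where t2: "E tau t2" using uE[OF tauG] by blast
  have t1T: "t1 \<in> T" and t2T: "t2 \<in> T" using t1 t2 by (auto simp: E_def)
  have t1G: "t1 \<in> G" and t2G: "t2 \<in> G" using t1T t2T TG by auto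
  have "minv t1 \<in> P" using t1 by (simp add: E_def)
  then have t1P: "t1 \<in> P" using Pi by fastforce
  have t2P: "t2 \<notin> P"
  proof
    assume "t2 \<in> P"
    moreover have "m2mult tau (minv t2) \<in> P" using t2 by (simp add: E_def)
    ultimately have "m2mult (m2mult tau (minv t2)) t2 \<in> P" using Pm by blast
    then have "tau \<in> P" using t2G GSL by (simp add: m2mult_assoc)
    then show False using tauP by simp
  qed
  have T: "T = {t1, t2}"
  proof
    show "T \<subseteq> {t1, t2}"
    proof
      fix t assume tT: "t \<in> T"
      then have tG: "t \<in> G" using TG by auto
      show "t \<in> {t1, t2}"
      proof (cases "t \<in> P")
        case True
        then have "E m2one t" using tT tG Pi Gi by (simp add: E_def)
        then have "t = t1" using uE[OF oneG] t1 by blast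
        then show ?thesis by simp
      next
        case False
        then have "m2mult tau (minv t) \<in> P" using L1[OF tauG tG tauP] by simp
        then have "E tau t" using tT tG Gi tauG Gm by (simp add: E_def)
        then have "t = t2" using uE[OF tauG] t2 by blast
        then show ?thesis by simp
      qed
    qed
    show "{t1, t2} \<subseteq> T" using t1T t2T by auto
  qed
  have "tv_rep G H T x = (if x \<in> P then t1 else t2)" if x: "x \<in> G" for x
  proof (cases "x \<in> P")
    case True
    have "E x t1" using True t1P t1T t1G x Pm Pi Gm Gi by (simp add: E_def)
    then have "(THE t. E x t) = t1" using uE[OF x] by (rule the1_equality[rotated])
    then show ?thesis using tv[OF x] True by simp
  next
    case False
    have "E x t2" using L1[OF x t2G False t2P] t2T t2G x Gm Gi by (simp add: E_def)
    then have "(THE t. E x t) = t2" using uE[OF x] by (rule the1_equality[rotated])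
    then show ?thesis using tv[OF x] False by simp
  qed
  then show ?thesis using T t1P t1G t2G t2P by blast
qed

lemma conj_cls: "h \<in> H \<Longrightarrow> y \<in> H \<Longrightarrow> cls H (m2mult (m2mult h y) (minv h)) = cls H y"
proof -
  assume h: "h \<in> H" and y: "y \<in> H"
  interpret A: comm_group "ab H" by (rule comm_ab[OF subH])
  have hi: "minv h \<in> H" using h by (rule sub_inv[OF subH])
  have hSL: "h \<in> SL2Z" using h GSL by blast
  have "cls H (m2mult (m2mult h y) (minv h)) = cls H h \<otimes>\<^bsub>ab H\<^esub> cls H y \<otimes>\<^bsub>ab H\<^esub> cls H (minv h)"
    using cHm[OF Hm[OF h y] hi] cHm[OF h y] by simp
  also have "\<dots> = cls H y \<otimes>\<^bsub>ab H\<^esub> (cls H h \<otimes>\<^bsub>ab H\<^esub> cls H (minv h))"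
    using cH[OF h] cH[OF y] cH[OF hi] by (simp add: A.m_ac)
  also have "\<dots> = cls H y \<otimes>\<^bsub>ab H\<^esub> cls H m2one"
    using cHm[OF h hi] hSL by simp
  also have "\<dots> = cls H y"
    using cHm[OF y sub_one[OF subH]] by simp
  finally show ?thesis .
qed

lemma transfer_eq: "g \<in> G \<Longrightarrow> transfer_elt G H g = Wm g"
proof -
  assume g: "g \<in> G"
  interpret A: comm_group "ab H" by (rule comm_ab[OF subH])
  define T where "T = (SOME T. right_transversal G H T)"
  have rt: "right_transversal G H T" unfolding T_def using rt_exists by (rule someI)
  obtain t1 t2 where T: "T = {t1,t2}" and t1: "t1 \<in> H" and t2G: "t2 \<in> G" and t2P: "t2 \<notin> P"
    and tv: "\<And>x. x \<in> G \<Longrightarrow> tv_rep G H T x = (if x \<in> P then t1 else t2)"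
    using rt_struct[OF rt] by blast
  have t12: "t1 \<noteq> t2" using t1 t2P by auto
  have t1G: "t1 \<in> G" using t1 by simp
  have t1SL: "t1 \<in> SL2Z" and t2SL: "t2 \<in> SL2Z" using t1G t2G GSL by auto
  define f where "f t = cls H (m2mult (m2mult t g) (m_inv (matgrp G) (tv_rep G H T (m2mult t g))))" for t
  have te: "transfer_elt G H g = finprod (ab H) f T"
    unfolding transfer_elt_def T_def[symmetric] f_def Let_def by simp
  have ft: "f t = cls H (m2mult (m2mult t g) (minv (if m2mult t g \<in> P then t1 else t2)))" if "t \<in> G" for t
  proof -
    have tg: "m2mult t g \<in> G" using that g Gm by blast
    have "(if m2mult t g \<in> P then t1 else t2) \<in> G" using t1G t2G by simp
    then show ?thesis unfolding f_def tv[OF tg] by (simp only: inv_sub[OF subG])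
  qed
  have h2: "m2mult t2 tinv \<in> H" using key2[OF t2G t2P] .
  show ?thesis
  proof (cases "g \<in> P")
    case True
    have a1: "m2mult t1 g \<in> P" using t1 True Pm by blast
    have a2: "m2mult t2 g \<notin> P" using Pmult_cases(2)[OF t2G g t2P True] .
    have gH: "g \<in> H" using g True by simp
    have cH3: "m2mult (m2mult tau g) tinv \<in> H" using L3[OF gH] tauG tinvG g Gm by blast
    have f1: "f t1 = cls H g" using ft[OF t1G] a1 conj_cls[OF t1 gH] by simp
    have e2: "m2mult (m2mult t2 g) (minv t2) = m2mult (m2mult (m2mult t2 tinv) (m2mult (m2mult tau g) tinv)) (minv (m2mult t2 tinv))"
      by (simp add: m2mult_assoc minv_mult)
    have f2: "f t2 = cls H (m2mult (m2mult tau g) tinv)" using ft[OF t2G] a2 e2 conj_cls[OF h2 cH3] by simp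
    have "finprod (ab H) f T = f t1 \<otimes>\<^bsub>ab H\<^esub> f t2"
      using T t12 f1 f2 cH[OF gH] cH[OF cH3] by simp
    also have "\<dots> = Wm g" unfolding f1 f2 Wm_def w_def using True cHm[OF gH cH3] by simp
    finally show ?thesis using te by simp
  next
    case False
    have a1: "m2mult t1 g \<notin> P" using Pmult_cases(1)[OF t1G g] t1 False by simp
    have a2: "m2mult t2 g \<in> P" using Pmult_cases(3)[OF t2G g t2P False] .
    have t1gG: "m2mult t1 g \<in> G" and t2gG: "m2mult t2 g \<in> G" using t1G t2G g Gm by auto
    have m1: "m2mult (m2mult t1 g) (minv t2) \<in> H" using L1[OF t1gG t2G a1 t2P] t1gG t2G Gm Gi by blast
    have m2: "m2mult (m2mult t2 g) (minv t1) \<in> H" using a2 t1 Pm Pi t2gG t1G Gm Gi by blast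
    have ggH: "m2mult g g \<in> H" using Pmult_cases(3)[OF g g False False] g Gm by blast
    have f1: "f t1 = cls H (m2mult (m2mult t1 g) (minv t2))" using ft[OF t1G] a1 by simp
    have f2: "f t2 = cls H (m2mult (m2mult t2 g) (minv t1))" using ft[OF t2G] a2 by simp
    have "finprod (ab H) f T = f t1 \<otimes>\<^bsub>ab H\<^esub> f t2"
      using T t12 f1 f2 cH[OF m1] cH[OF m2] by simp
    also have "\<dots> = cls H (m2mult (m2mult (m2mult t1 g) (minv t2)) (m2mult (m2mult t2 g) (minv t1)))"
      unfolding f1 f2 using cHm[OF m1 m2] by simp
    also have "m2mult (m2mult (m2mult t1 g) (minv t2)) (m2mult (m2mult t2 g) (minv t1)) = m2mult (m2mult t1 (m2mult g g)) (minv t1)"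
      using t2SL by (simp add: m2mult_assoc)
    also have "cls H \<dots> = cls H (m2mult g g)" by (rule conj_cls[OF t1 ggH])
    also have "\<dots> = Wm g" unfolding Wm_def w_def using False by (simp add: m2mult_assoc)
    finally show ?thesis using te by simp
  qed
qed

end


lemma Phi_mem: "(a,b,c,d) \<in> Phi N r s \<longleftrightarrow> a * d - b * c = 1 \<and> N * 2^s dvd c \<and> N * 2^s dvd a - 1 \<and> N * 2^s dvd d - 1 \<and> 2^r dvd c"
  by (auto simp: Phi_def Gamma1_def Gamma0_def SL2Z_def)

lemma P_mem: "(a,b,c,d) \<in> P \<longleftrightarrow> a * d - b * c = 1 \<and> 2 dvd b"
  by (auto simp: Gamma0_upper2_def SL2Z_def)

lemma idx2_Phi: assumes "s \<ge> 1" shows "idx2 (Phi N r s)"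
proof (rule idx2.intro)
  show "subgroup (Phi N r s) GG" by (rule sub_Phi)
  have "2 dvd (N * 2^s :: int)" using assms by (simp add: dvd_mult power_eq_if)
  show "tau \<in> Phi N r s" by (simp add: tau_def Phi_mem)
  show "tau \<notin> P" by (simp add: tau_def P_mem)
  fix x assume x: "x \<in> Phi N r s" "x \<notin> P"
  obtain a b c d where xx: "x = (a,b,c,d)" by (cases x) auto
  have two: "(2::int) dvd N * 2^s" using assms by (cases s) auto
  have h: "a * d - b * c = 1" "N * 2^s dvd a - 1" "\<not> 2 dvd b" using x xx by (auto simp: Phi_mem P_mem)
  have "2 dvd a - 1" using two h(2) dvd_trans by blast
  then have "2 dvd b - a" using h(3) by presburger
  moreover have "m2mult x tinv \<in> SL2Z" using SL2Z_mult[OF sub_SL[OF sub_Phi x(1)] tinv_SL] .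
  ultimately show "m2mult x tinv \<in> P" using xx by (simp add: tinv_def Gamma0_upper2_def)
qed

lemma tconj_mult: "x \<in> P \<Longrightarrow> y \<in> P \<Longrightarrow> tconj (m2mult x y) = m2mult (tconj x) (tconj y)"
proof -
  assume x: "x \<in> P" and y: "y \<in> P"
  obtain a b c d where xx: "x = (a,b,c,d)" by (cases x) auto
  obtain e f g h where yy: "y = (e,f,g,h)" by (cases y) auto
  obtain b' where b: "b = 2 * b'" using x xx by (auto simp: P_mem)
  obtain f' where f: "f = 2 * f'" using y yy by (auto simp: P_mem)
  have "(a * f+b * h) div 2 = a * f'+b'*h" unfolding b f by (simp add: algebra_simps)
  then show ?thesis using xx yy b f by (simp add: algebra_simps)
qed

lemma tconj_in: "x \<in> Phi N r s \<inter> P \<Longrightarrow> tconj x \<in> Phi N (Suc r) s"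
proof -
  assume x: "x \<in> Phi N r s \<inter> P"
  obtain a b c d where xx: "x = (a,b,c,d)" by (cases x) auto
  obtain b' where b: "b = 2 * b'" using x xx by (auto simp: P_mem)
  have h: "a * d - b * c = 1" "N * 2^s dvd c" "N * 2^s dvd a - 1" "N * 2^s dvd d - 1" "2^r dvd c"
    using x xx by (auto simp: Phi_mem)
  have "a * d - b'*(2 * c) = 1" using h(1) b by (simp add: algebra_simps)
  moreover have "N * 2^s dvd 2 * c" using h(2) by simp
  moreover have "2^Suc r dvd 2 * c" using h(5) by simp
  ultimately show ?thesis using xx b h by (simp add: Phi_mem)
qed

lemma group_hom_tconj: "group_hom (matgrp (Phi N r s \<inter> P)) (matgrp (Phi N (Suc r) s)) tconj"
  apply (rule group_hom.intro)
    apply (rule group_sub[OF sub_PhiH])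
   apply (rule group_sub[OF sub_Phi])
  apply (rule group_hom_axioms.intro)
  apply (rule homI)
   apply (simp only: matgrp_simps) apply (erule tconj_in)
  apply (simp only: matgrp_simps) apply (rule tconj_mult) apply blast+
  done

lemma tconj_derived: "d \<in> derived GG (Phi N r s \<inter> P) \<Longrightarrow> tconj d \<in> derived GG (Phi N (Suc r) s)"
proof -
  assume d: "d \<in> derived GG (Phi N r s \<inter> P)"
  interpret T: group_hom "matgrp (Phi N r s \<inter> P)" "matgrp (Phi N (Suc r) s)" tconj
    by (rule group_hom_tconj)
  have "tconj d \<in> tconj ` derived (matgrp (Phi N r s \<inter> P)) (Phi N r s \<inter> P)"
    using d derived_eq[OF sub_PhiH] by auto
  also have "\<dots> = derived (matgrp (Phi N (Suc r) s)) (tconj ` (Phi N r s \<inter> P))"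
    using T.derived_img[of "Phi N r s \<inter> P"] by simp
  also have "\<dots> \<subseteq> derived (matgrp (Phi N (Suc r) s)) (Phi N (Suc r) s)"
    by (rule group.mono_derived[OF group_sub[OF sub_Phi]]) (use tconj_in in blast)
  also have "\<dots> = derived GG (Phi N (Suc r) s)" by (rule derived_eq[OF sub_Phi])
  finally show ?thesis .
qed



lemma Phi_mono: "r' \<le> r \<Longrightarrow> s' \<le> s \<Longrightarrow> Phi N r s \<subseteq> Phi N r' s'"
proof
  fix x assume a: "r' \<le> r" "s' \<le> s" and x: "x \<in> Phi N r s"
  obtain a b c d where xx: "x = (a,b,c,d)" by (cases x) auto
  have d1: "N * 2^s' dvd N * 2^s" using a(2) by (simp add: le_imp_power_dvd)
  have d2: "(2::int)^r' dvd 2^r" using a(1) by (simp add: le_imp_power_dvd)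
  show "x \<in> Phi N r' s'" using x xx dvd_trans[OF d1] dvd_trans[OF d2] by (auto simp: Phi_mem)
qed

lemma core:
  assumes "s \<ge> 1" "s' \<ge> 1" "r' \<le> r" "s' \<le> s" and C: "C \<in> carrier (ab (Phi N r s))"
  shows "\<exists>y y2. Uprime N r s C = cls (Phi N (Suc r) s) (tconj y) \<and>
     Uprime N r' s' (incl_ab (Phi N r s) (Phi N r' s') C) = cls (Phi N (Suc r') s') (tconj y2) \<and>
     y \<in> Phi N r s \<inter> P \<and> y2 \<in> Phi N r' s' \<inter> P \<and>
     tconj y \<in> cls (Phi N (Suc r') s') (tconj y2)"
proof -
  define G where "G = Phi N r s"
  define K where "K = Phi N r' s'"
  define K1 where "K1 = Phi N (Suc r') s'"
  interpret IG: idx2 G unfolding G_def by (rule idx2_Phi[OF assms(1)])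
  interpret IK: idx2 K unfolding K_def by (rule idx2_Phi[OF assms(2)])
  have GK: "G \<subseteq> K" unfolding G_def K_def by (rule Phi_mono[OF assms(3,4)])
  have HK: "G \<inter> P \<subseteq> K \<inter> P" using GK by blast
  have sG: "subgroup G GG" and sK: "subgroup K GG" and sK1: "subgroup K1 GG"
    unfolding G_def K_def K1_def by (rule sub_Phi)+
  have sH: "subgroup (G \<inter> P) GG" and sHK: "subgroup (K \<inter> P) GG" by (rule IG.subH, rule IK.subH)
  define g0 where "g0 = (SOME g. g \<in> C)"
  have g0: "g0 \<in> C" "g0 \<in> G" "C = cls G g0" using carrier_ab_some[OF sG C[folded G_def]] unfolding g0_def by auto
  have tG: "transfer_ab G (G \<inter> P) C = cls (G \<inter> P) (w g0)"
    unfolding transfer_ab_def g0_def[symmetric] using IG.transfer_eq[OF g0(2)] by (simp add: IG.Wm_def)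
  define y where "y = (SOME y. y \<in> cls (G \<inter> P) (w g0))"
  have wg0: "w g0 \<in> G \<inter> P" by (rule IG.w_in[OF g0(2)])
  have y: "y \<in> cls (G \<inter> P) (w g0)" unfolding y_def by (rule someI, rule cls_self[OF sH wg0])
  have yH: "y \<in> G \<inter> P" using cls_sub[OF sH wg0] y by blast
  have U1: "Uprime N r s C = cls (Phi N (Suc r) s) (tconj y)"
    unfolding Uprime_def Let_def G_def[symmetric] tG y_def ..
  have inclC: "incl_ab G K C = cls K g0" unfolding incl_ab_def g0_def ..
  define g2 where "g2 = (SOME g. g \<in> cls K g0)"
  have g0K: "g0 \<in> K" using g0 GK by blast
  have g2: "g2 \<in> cls K g0" unfolding g2_def by (rule someI, rule cls_self[OF sK g0K])
  have g2K: "g2 \<in> K" using cls_sub[OF sK g0K] g2 by blast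
  have tK: "transfer_ab K (K \<inter> P) (cls K g0) = cls (K \<inter> P) (w g0)"
    unfolding transfer_ab_def g2_def[symmetric] using IK.transfer_eq[OF g2K] IK.Wm_cls[OF g0K g2]
    by (simp add: IK.Wm_def)
  define y2 where "y2 = (SOME y. y \<in> cls (K \<inter> P) (w g0))"
  have wg0K: "w g0 \<in> K \<inter> P" by (rule IK.w_in[OF g0K])
  have y2: "y2 \<in> cls (K \<inter> P) (w g0)" unfolding y2_def by (rule someI, rule cls_self[OF sHK wg0K])
  have y2H: "y2 \<in> K \<inter> P" using cls_sub[OF sHK wg0K] y2 by blast
  have U2: "Uprime N r' s' (incl_ab G K C) = cls K1 (tconj y2)"
    unfolding inclC Uprime_def Let_def K_def[symmetric] K1_def[symmetric] tK y2_def ..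
  have "cls (K \<inter> P) y = cls (K \<inter> P) (w g0)" using cls_incl[OF sH sHK HK wg0 y] .
  moreover have "cls (K \<inter> P) y2 = cls (K \<inter> P) (w g0)" using cls_repr[OF sHK wg0K y2] .
  ultimately have "y \<in> cls (K \<inter> P) y2" using cls_self[OF sHK, of y] yH HK by auto
  then obtain d where d: "d \<in> derived GG (K \<inter> P)" "y = m2mult d y2"
    unfolding cls_eq_def[OF sHK] r_coset_def by auto
  have dP: "d \<in> P" using d derived_sub[OF sHK] by blast
  have "tconj y = m2mult (tconj d) (tconj y2)" using d(2) tconj_mult[OF dP] y2H by simp
  moreover have "tconj d \<in> derived GG K1" unfolding K1_def using tconj_derived d(1) unfolding K_def by blast
  ultimately have "tconj y \<in> cls K1 (tconj y2)" unfolding cls_eq_def[OF sK1] r_coset_def by auto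
  then show ?thesis using U1 U2 yH y2H unfolding G_def K_def K1_def by blast
qed



theorem lemma3p2:
  fixes N :: int and r s r' s' :: nat
  assumes "N > 0" and "odd N"
    and "r \<ge> s" and "s \<ge> 2" and "r' \<ge> s'" and "s' \<ge> 2"
    and "r \<ge> r'" and "s \<ge> s'"
  shows "(\<forall>C \<in> carrier (ab (Phi N r s)).
           incl_ab (Phi N (Suc r) s) (Phi N (Suc r') s') (Uprime N r s C)
             = Uprime N r' s' (incl_ab (Phi N r s) (Phi N r' s') C))
         \<and> (\<forall>C \<in> carrier (ab (Phi N r s)).
           incl_ab (Phi N r s) (Phi N r' s') (Atkin_U N r s C)
             = Atkin_U N r' s' (incl_ab (Phi N r s) (Phi N r' s') C))"
proof -
  have s1: "s \<ge> 1" "s' \<ge> 1" using assms by auto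
  have sub1: "Phi N (Suc r) s \<subseteq> Phi N (Suc r') s'" by (rule Phi_mono) (use assms in auto)
  have sub2: "Phi N (Suc r) s \<subseteq> Phi N r s" by (rule Phi_mono) auto
  have sub3: "Phi N (Suc r') s' \<subseteq> Phi N r' s'" by (rule Phi_mono) auto
  have sub4: "Phi N r s \<subseteq> Phi N r' s'" by (rule Phi_mono) (use assms in auto)
  have P1: "incl_ab (Phi N (Suc r) s) (Phi N (Suc r') s') (Uprime N r s C)
             = Uprime N r' s' (incl_ab (Phi N r s) (Phi N r' s') C)
     \<and> incl_ab (Phi N r s) (Phi N r' s') (Atkin_U N r s C)
             = Atkin_U N r' s' (incl_ab (Phi N r s) (Phi N r' s') C)"
    if C: "C \<in> carrier (ab (Phi N r s))" for C
  proof -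
    obtain y y2 where U1: "Uprime N r s C = cls (Phi N (Suc r) s) (tconj y)"
      and U2: "Uprime N r' s' (incl_ab (Phi N r s) (Phi N r' s') C) = cls (Phi N (Suc r') s') (tconj y2)"
      and yH: "y \<in> Phi N r s \<inter> P" and y2H: "y2 \<in> Phi N r' s' \<inter> P"
      and yy: "tconj y \<in> cls (Phi N (Suc r') s') (tconj y2)"
      using core[OF s1 assms(7) assms(8) C] by blast
    have ty: "tconj y \<in> Phi N (Suc r) s" by (rule tconj_in[OF yH])
    have ty2: "tconj y2 \<in> Phi N (Suc r') s'" by (rule tconj_in[OF y2H])
    have e1: "cls (Phi N (Suc r') s') (tconj y) = cls (Phi N (Suc r') s') (tconj y2)"
      by (rule cls_repr[OF sub_Phi ty2 yy])
    have e2: "cls (Phi N r' s') (tconj y) = cls (Phi N r' s') (tconj y2)"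
      by (rule cls_incl[OF sub_Phi sub_Phi sub3 ty2 yy])
    have A: "incl_ab (Phi N (Suc r) s) (Phi N (Suc r') s') (Uprime N r s C)
             = Uprime N r' s' (incl_ab (Phi N r s) (Phi N r' s') C)"
      unfolding U1 U2 using incl_ab_cls[OF sub_Phi sub_Phi sub1 ty] e1 by simp
    have "Atkin_U N r s C = cls (Phi N r s) (tconj y)"
      unfolding Atkin_U_def U1 by (rule incl_ab_cls[OF sub_Phi sub_Phi sub2 ty])
    then have B1: "incl_ab (Phi N r s) (Phi N r' s') (Atkin_U N r s C) = cls (Phi N r' s') (tconj y)"
    proof -
      have "tconj y \<in> Phi N r s" using ty sub2 by blast
      then show ?thesis using incl_ab_cls[OF sub_Phi sub_Phi sub4, of "tconj y"] \<open>Atkin_U N r s C = _\<close> by simp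
    qed
    have B2: "Atkin_U N r' s' (incl_ab (Phi N r s) (Phi N r' s') C) = cls (Phi N r' s') (tconj y2)"
      unfolding Atkin_U_def U2 by (rule incl_ab_cls[OF sub_Phi sub_Phi sub3 ty2])
    show ?thesis using A B1 B2 e2 by simp
  qed
  then show ?thesis by blast
qed


end
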